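(* Let $m\ge0$, $n\ge1$ and let $s_1,\dots,s_n\in\mathbb Z$ with $\sum_{i=1}^n s_i=0$. Then $y_{1^{m+1}0}^{s_1}y_{1^{m+2}0}^{s_2}\cdots y_{1^{m+n}0}^{s_n}\in S$.
   Context: Let $\{0,1\}^{\mathbb N}$ be the Cantor set of infinite binary sequences and $\{0,1\}^{<\mathbb N}$ the set of finite binary words, including the empty word; juxtaposition denotes concatenation, $0^n,1^n$ denote constant words. Homeomorphisms act on the right. Define $x,y$ by $00\eta\cdot x=0\eta$, $01\eta\cdot x=10\eta$, $1\eta\cdot x=11\eta$, and recursively $00\eta\cdot y=0(\eta\cdot y)$, $01\eta\cdot y=10(\eta\cdot y^{-1})$, $1\eta\cdot y=11(\eta\cdot y)$; $x_s$ (resp. $y_s$) sends $s\eta\mapsto s(\eta\cdot x)$ (resp. $s(\eta\cdot y)$) and fixes sequences not beginning with $s$. For $n\ge0$, $p_n$ is the homeomorphism with $1^k0\eta\cdot p_n=1^{k+1}0\eta$ for $0\le k\le n-1$, $1^n0\eta\cdot p_n=1^{n+1}\eta$, and $1^{n+1}\eta\cdot p_n=0\eta$. $T$ is the group generated by all $x_s$ and all $p_n$, and $S=\langle T,\ y_{10}y_{110}^{-1}\rangle$. *)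

theory Defs
  imports Main
begin

text \<open>Points of the Cantor set are infinite binary sequences, modelled as
  functions nat => bool (False = 0, True = 1).
  Homeomorphisms act on the right; we model them as ordinary functions,
  so the right-action product g h (first g, then h) is the composition h o g.\<close>

type_synonym cseq = "nat \<Rightarrow> bool"
type_synonym homeo = "cseq \<Rightarrow> cseq"

definition prepend :: "bool list \<Rightarrow> cseq \<Rightarrow> cseq" (infixr "@@" 65) where
  "w @@ \<eta> = (\<lambda>i. if i < length w then w ! i else \<eta> (i - length w))"

definition sdrop :: "nat \<Rightarrow> cseq \<Rightarrow> cseq" where
  "sdrop k \<eta> = (\<lambda>i. \<eta> (i + k))"

definition has_prefix :: "bool list \<Rightarrow> cseq \<Rightarrow> bool" where
  "has_prefix w \<eta> \<longleftrightarrow> map \<eta> [0..<length w] = w"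

definition xmap :: homeo where
  "xmap \<eta> =
     (if \<not> \<eta> 0 \<and> \<not> \<eta> 1 then [False] @@ sdrop 2 \<eta>
      else if \<not> \<eta> 0 \<and> \<eta> 1 then [True, False] @@ sdrop 2 \<eta>
      else [True, True] @@ sdrop 1 \<eta>)"

text \<open>The recursive map y (and y^-1) is realised by a finite-state transducer on
  finite words: flag False computes y, flag True computes y^-1.  Its defining
  equations are exactly the recursive equations of y and of y^-1
  (0xi.y^-1 = 00(xi.y^-1), 10xi.y^-1 = 01(xi.y), 11xi.y^-1 = 1(xi.y^-1)).
  An incomplete final block produces no output.\<close>
fun ytr :: "bool \<Rightarrow> bool list \<Rightarrow> bool list" where
  "ytr False (False # False # w) = False # ytr False w"
| "ytr False (False # True # w) = True # False # ytr True w"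
| "ytr False (True # w) = True # True # ytr False w"
| "ytr False _ = []"
| "ytr True (False # w) = False # False # ytr True w"
| "ytr True (True # False # w) = False # True # ytr False w"
| "ytr True (True # True # w) = True # ytr True w"
| "ytr True _ = []"

text \<open>Each step consumes at most 2 input letters and emits at least 1, so the
  image of a prefix of length 2n+3 determines the n-th output letter.\<close>
definition ymap :: homeo where
  "ymap \<eta> = (\<lambda>n. ytr False (map \<eta> [0..<2 * n + 3]) ! n)"

definition x_at :: "bool list \<Rightarrow> homeo" where
  "x_at s \<eta> = (if has_prefix s \<eta> then s @@ xmap (sdrop (length s) \<eta>) else \<eta>)"

definition y_at :: "bool list \<Rightarrow> homeo" where
  "y_at s \<eta> = (if has_prefix s \<eta> then s @@ ymap (sdrop (length s) \<eta>) else \<eta>)"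

definition p_map :: "nat \<Rightarrow> homeo" where
  "p_map n \<eta> =
     (if has_prefix (replicate (n + 1) True) \<eta> then [False] @@ sdrop (n + 1) \<eta>
      else (let k = (LEAST k. \<not> \<eta> k) in
            if k < n then (replicate (k + 1) True @ [False]) @@ sdrop (k + 1) \<eta>
            else replicate (n + 1) True @@ sdrop (n + 1) \<eta>))"

inductive_set gen_group :: "homeo set \<Rightarrow> homeo set" for G :: "homeo set" where
  gen: "g \<in> G \<Longrightarrow> g \<in> gen_group G"
| one: "id \<in> gen_group G"
| mult: "g \<in> gen_group G \<Longrightarrow> h \<in> gen_group G \<Longrightarrow> h \<circ> g \<in> gen_group G"
| inverse: "g \<in> gen_group G \<Longrightarrow> inv g \<in> gen_group G"

definition T_group :: "homeo set" where
  "T_group = gen_group (range x_at \<union> range p_map)"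

text \<open>S = < T, y_10 y_110^-1 >; with right actions, y_10 y_110^-1 is inv(y_110) o y_10.\<close>
definition S_group :: "homeo set" where
  "S_group = gen_group (T_group \<union> {inv (y_at [True, True, False]) \<circ> y_at [True, False]})"

definition zpow :: "homeo \<Rightarrow> int \<Rightarrow> homeo" where
  "zpow g k = (if 0 \<le> k then g ^^ nat k else inv g ^^ nat (- k))"

text \<open>Right-action product g_1 g_2 ... g_n (apply g_1 first) = g_n o ... o g_1.\<close>
definition rprod :: "homeo list \<Rightarrow> homeo" where
  "rprod gs = foldl (\<lambda>acc g. g \<circ> acc) id gs"

end

theory Submission
  imports Defs
begin


lemma ytr_prefix: "\<exists>r. ytr b (w @ v) = ytr b w @ r"
  by (induction b w rule: ytr.induct) auto

lemma ytr_len: "length w \<le> 2 * length (ytr b w) + 1"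
  by (induction b w rule: ytr.induct) auto

lemma ytr_inv: "\<exists>r. w = ytr (\<not> b) (ytr b w) @ r"
  by (induction b w rule: ytr.induct) auto

definition Ym :: "bool \<Rightarrow> homeo" where
  "Ym b \<eta> = (\<lambda>n. ytr b (map \<eta> [0..<2*n+3]) ! n)"

lemma pre_nth: "ys = xs @ r \<Longrightarrow> j < length xs \<Longrightarrow> ys ! j = xs ! j"
  by (simp add: nth_append)

lemma map_split: "K \<le> M \<Longrightarrow> map \<eta> [0..<M] = map \<eta> [0..<K] @ map \<eta> [K..<M]"
  by (metis le0 upt_add_eq_append le_add_diff_inverse map_append)

lemma Ym_nth:
  assumes "j < length (ytr b (map \<eta> [0..<K]))"
  shows "Ym b \<eta> j = ytr b (map \<eta> [0..<K]) ! j"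
proof -
  define M where "M = max K (2*j+3)"
  have e1: "map \<eta> [0..<M] = map \<eta> [0..<K] @ map \<eta> [K..<M]"
    unfolding M_def by (rule map_split) simp
  have e2: "map \<eta> [0..<M] = map \<eta> [0..<2*j+3] @ map \<eta> [2*j+3..<M]"
    unfolding M_def by (rule map_split) simp
  obtain r1 where r1: "ytr b (map \<eta> [0..<M]) = ytr b (map \<eta> [0..<K]) @ r1"
    using ytr_prefix e1 by metis
  obtain r2 where r2: "ytr b (map \<eta> [0..<M]) = ytr b (map \<eta> [0..<2*j+3]) @ r2"
    using ytr_prefix e2 by metis
  have "length (map \<eta> [0..<2*j+3]) \<le> 2 * length (ytr b (map \<eta> [0..<2*j+3])) + 1"
    by (rule ytr_len)
  then have l: "j < length (ytr b (map \<eta> [0..<2*j+3]))" by simp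
  show ?thesis unfolding Ym_def
    using pre_nth[OF r1 assms] pre_nth[OF r2 l] by simp
qed

lemma Ym_inv: "Ym (\<not> b) (Ym b \<eta>) = \<eta>"
proof
  fix n
  define K :: nat where "K = 4*n+7"
  define u where "u = ytr b (map \<eta> [0..<K])"
  have "length (map \<eta> [0..<K]) \<le> 2 * length u + 1" unfolding u_def by (rule ytr_len)
  then have lu: "2*n+3 \<le> length u" unfolding K_def by simp
  have tk: "map (Ym b \<eta>) [0..<2*n+3] = take (2*n+3) u"
    by (rule nth_equalityI) (use lu in \<open>auto simp: Ym_nth u_def\<close>)
  define w where "w = take (2*n+3) u"
  obtain r1 where r1: "ytr (\<not> b) u = ytr (\<not> b) w @ r1"
    using ytr_prefix[of "\<not> b" w "drop (2*n+3) u"] unfolding w_def by auto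
  obtain r2 where r2: "map \<eta> [0..<K] = ytr (\<not> b) u @ r2"
    using ytr_inv[of "map \<eta> [0..<K]" b] unfolding u_def by auto
  have "length w \<le> 2 * length (ytr (\<not> b) w) + 1" by (rule ytr_len)
  then have ln: "n < length (ytr (\<not> b) w)" using lu unfolding w_def by simp
  have "Ym (\<not> b) (Ym b \<eta>) n = ytr (\<not> b) w ! n"
    using tk unfolding w_def by (simp only: Ym_def)
  also have "\<dots> = ytr (\<not> b) u ! n" using pre_nth[OF r1 ln] by simp
  also have "\<dots> = map \<eta> [0..<K] ! n"
    using pre_nth[OF r2] ln r1 by simp
  also have "\<dots> = \<eta> n" unfolding K_def by simp
  finally show "Ym (\<not> b) (Ym b \<eta>) n = \<eta> n" .
qed

lemma ymap_Ym: "ymap = Ym False"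
  unfolding ymap_def Ym_def by (rule ext) simp

lemma Ym_TF: "Ym True (Ym False \<eta>) = \<eta>" using Ym_inv[of False] by simp
lemma Ym_FT: "Ym False (Ym True \<eta>) = \<eta>" using Ym_inv[of True] by simp



lemma hp_app: "has_prefix s (s @@ \<zeta>)"
  unfolding has_prefix_def prepend_def by (rule nth_equalityI) auto

lemma sdrop_app: "sdrop (length s) (s @@ \<zeta>) = \<zeta>"
  unfolding sdrop_def prepend_def by auto

lemma hp_decomp: "has_prefix s \<eta> \<Longrightarrow> s @@ sdrop (length s) \<eta> = \<eta>"
  unfolding has_prefix_def prepend_def sdrop_def
proof (rule ext)
  fix i assume h: "map \<eta> [0..<length s] = s"
  show "(if i < length s then s ! i else \<eta> (i - length s + length s)) = \<eta> i"
  proof (cases "i < length s")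
    case True
    then have "map \<eta> [0..<length s] ! i = \<eta> i" by simp
    then show ?thesis using True h by simp
  qed simp
qed

definition yi_at :: "bool list \<Rightarrow> homeo" where
  "yi_at s \<eta> = (if has_prefix s \<eta> then s @@ Ym True (sdrop (length s) \<eta>) else \<eta>)"

lemma y_at_bij: "bij (y_at s)"
proof (rule o_bij[of "yi_at s"])
  show "yi_at s \<circ> y_at s = id"
  proof
    fix \<eta> show "(yi_at s \<circ> y_at s) \<eta> = id \<eta>"
      by (auto simp: yi_at_def y_at_def hp_app sdrop_app ymap_Ym Ym_TF hp_decomp)
  qed
  show "y_at s \<circ> yi_at s = id"
  proof
    fix \<eta> show "(y_at s \<circ> yi_at s) \<eta> = id \<eta>"
      by (auto simp: yi_at_def y_at_def hp_app sdrop_app ymap_Ym Ym_FT hp_decomp)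
  qed
qed

lemma y_at_pres: "has_prefix s (y_at s \<eta>) \<longleftrightarrow> has_prefix s \<eta>"
  by (auto simp: y_at_def hp_app)

lemma y_at_comm:
  assumes "\<And>\<eta>. \<not> (has_prefix a \<eta> \<and> has_prefix b \<eta>)"
  shows "y_at a \<circ> y_at b = y_at b \<circ> y_at a"
proof
  fix \<eta>
  show "(y_at a \<circ> y_at b) \<eta> = (y_at b \<circ> y_at a) \<eta>"
  proof (cases "has_prefix a \<eta>")
    case True
    then have "\<not> has_prefix b \<eta>" "\<not> has_prefix b (y_at a \<eta>)"
      using assms y_at_pres by blast+
    then show ?thesis by (simp add: y_at_def)
  next
    case False
    then have "\<not> has_prefix a (y_at b \<eta>)"
      using assms y_at_pres by (metis y_at_def)
    then show ?thesis using False by (simp add: y_at_def)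
  qed
qed

lemma hp_rep: "has_prefix (replicate i True @ [False]) \<eta> \<longleftrightarrow> (\<forall>k<i. \<eta> k) \<and> \<not> \<eta> i"
proof -
  have "has_prefix (replicate i True @ [False]) \<eta> \<longleftrightarrow>
        (\<forall>k<Suc i. \<eta> k = (replicate i True @ [False]) ! k)"
    unfolding has_prefix_def list_eq_iff_nth_eq by (simp del: upt_Suc)
  also have "\<dots> \<longleftrightarrow> (\<forall>k<i. \<eta> k) \<and> \<not> \<eta> i"
    by (auto simp: nth_append less_Suc_eq)
  finally show ?thesis .
qed

lemma Y_comm: "i \<noteq> j \<Longrightarrow> y_at (replicate i True @ [False]) \<circ> y_at (replicate j True @ [False])
   = y_at (replicate j True @ [False]) \<circ> y_at (replicate i True @ [False])"
  apply (rule y_at_comm)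
  apply (simp add: hp_rep)
  by (metis linorder_neqE_nat)

lemma y_conj:
  assumes "inj g" "\<And>\<xi>. g (s @@ \<xi>) = t @@ \<xi>"
  shows "y_at t \<circ> g = g \<circ> y_at s"
proof
  fix \<eta>
  show "(y_at t \<circ> g) \<eta> = (g \<circ> y_at s) \<eta>"
  proof (cases "has_prefix s \<eta>")
    case True
    define \<xi> where "\<xi> = sdrop (length s) \<eta>"
    have e: "\<eta> = s @@ \<xi>" using hp_decomp[OF True] unfolding \<xi>_def by simp
    show ?thesis using True unfolding e
      by (simp add: assms(2) y_at_def hp_app sdrop_app)
  next
    case False
    have "\<not> has_prefix t (g \<eta>)"
    proof
      assume h: "has_prefix t (g \<eta>)"
      define \<zeta> where "\<zeta> = sdrop (length t) (g \<eta>)"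
      have "g \<eta> = g (s @@ \<zeta>)" using hp_decomp[OF h] assms(2) unfolding \<zeta>_def by simp
      then have "\<eta> = s @@ \<zeta>" using assms(1) by (simp add: inj_eq)
      then show False using False hp_app by simp
    qed
    then show ?thesis using False by (simp add: y_at_def)
  qed
qed

definition xinv :: homeo where
  "xinv \<eta> = (if \<not> \<eta> 0 then [False, False] @@ sdrop 1 \<eta>
              else if \<not> \<eta> 1 then [False, True] @@ sdrop 2 \<eta>
              else [True] @@ sdrop 2 \<eta>)"

lemma xmap_bij: "bij xmap"
proof (rule o_bij[of xinv])
  show "xinv \<circ> xmap = id"
  proof (rule ext, rule ext)
    fix \<eta> i show "(xinv \<circ> xmap) \<eta> i = id \<eta> i"
      by (cases i; cases "i - 1"; auto simp: xinv_def xmap_def prepend_def sdrop_def)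
  qed
  show "xmap \<circ> xinv = id"
  proof (rule ext, rule ext)
    fix \<eta> i show "(xmap \<circ> xinv) \<eta> i = id \<eta> i"
      by (cases i; cases "i - 1"; auto simp: xinv_def xmap_def prepend_def sdrop_def)
  qed
qed

lemma xmap_T: "xmap ((True # w) @@ \<xi>) = (True # True # w) @@ \<xi>"
  by (rule ext) (auto simp: xmap_def prepend_def sdrop_def nth_Cons split: nat.split)

lemma xmap_pow: "1 \<le> j \<Longrightarrow>
  (xmap ^^ k) ((replicate j True @ [False]) @@ \<xi>) = (replicate (j + k) True @ [False]) @@ \<xi>"
proof (induction k)
  case 0 then show ?case by simp
next
  case (Suc k)
  obtain q where q: "j + k = Suc q" using Suc.prems by (cases "j+k") auto
  have "(xmap ^^ Suc k) ((replicate j True @ [False]) @@ \<xi>) =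
        xmap ((True # (replicate q True @ [False])) @@ \<xi>)"
    using Suc q by simp
  also have "\<dots> = (replicate (j + Suc k) True @ [False]) @@ \<xi>"
    using q by (simp add: xmap_T)
  finally show ?case .
qed

lemma x_at_nil: "x_at [] = xmap"
  by (rule ext) (simp add: x_at_def has_prefix_def prepend_def sdrop_def)



lemma S_comp: "g \<in> S_group \<Longrightarrow> h \<in> S_group \<Longrightarrow> h \<circ> g \<in> S_group"
  unfolding S_group_def by (rule gen_group.mult)
lemma S_inv: "g \<in> S_group \<Longrightarrow> inv g \<in> S_group"
  unfolding S_group_def by (rule gen_group.inverse)
lemma S_id: "id \<in> S_group"
  unfolding S_group_def by (rule gen_group.one)
lemma S_pow: "g \<in> S_group \<Longrightarrow> g ^^ k \<in> S_group"
  by (induction k) (auto simp: S_id S_comp)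
lemma S_gen: "inv (y_at [True, True, False]) \<circ> y_at [True, False] \<in> S_group"
  unfolding S_group_def by (rule gen_group.gen) simp
lemma S_x: "xmap \<in> S_group"
  unfolding S_group_def T_group_def
  by (rule gen_group.gen, rule UnI1, rule gen_group.gen) (auto simp: x_at_nil[symmetric])

abbreviation Yb :: "nat \<Rightarrow> homeo" where
  "Yb j \<equiv> y_at (replicate j True @ [False])"

lemma conj_inv:
  assumes "bij B" "bij B'" "B' \<circ> g = g \<circ> B"
  shows "inv B' \<circ> g = g \<circ> inv B"
proof
  fix x
  define z where "z = inv B x"
  have Bz: "B z = x" unfolding z_def using assms(1) by (simp add: bij_is_surj surj_f_inv_f)
  have "B' (g z) = g x" using fun_cong[OF assms(3), of z] Bz by simp
  then have "inv B' (g x) = g z" using assms(2) by (metis bij_inv_eq_iff)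
  then show "(inv B' \<circ> g) x = (g \<circ> inv B) x" unfolding z_def by simp
qed

lemma ck_S: "inv (Yb (k+2)) \<circ> Yb (k+1) \<in> S_group"
proof -
  define g where "g = xmap ^^ k"
  have bg: "bij g" unfolding g_def using xmap_bij by (simp add: bij_betw_funpow)
  have c1: "Yb (k+1) \<circ> g = g \<circ> Yb 1"
    by (rule y_conj) (use bg xmap_pow[of 1 k] in \<open>auto simp: g_def bij_is_inj\<close>)
  have c2: "Yb (k+2) \<circ> g = g \<circ> Yb 2"
    by (rule y_conj) (use bg xmap_pow[of 2 k] in \<open>auto simp: g_def bij_is_inj\<close>)
  have c2': "inv (Yb (k+2)) \<circ> g = g \<circ> inv (Yb 2)"
    by (rule conj_inv[OF y_at_bij y_at_bij c2])
  have e: "(inv (Yb (k+2)) \<circ> Yb (k+1)) \<circ> g = g \<circ> (inv (Yb 2) \<circ> Yb 1)"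
    by (metis c1 c2' comp_assoc)
  have gi: "g \<circ> inv g = id" using bij_is_surj[OF bg, unfolded surj_iff] .
  have "inv (Yb (k+2)) \<circ> Yb (k+1) = ((inv (Yb (k+2)) \<circ> Yb (k+1)) \<circ> g) \<circ> inv g"
    using gi by (simp add: comp_assoc)
  also have "\<dots> = g \<circ> ((inv (Yb 2) \<circ> Yb 1) \<circ> inv g)" using e by (simp add: comp_assoc)
  finally have eq: "inv (Yb (k+2)) \<circ> Yb (k+1) = g \<circ> ((inv (Yb 2) \<circ> Yb 1) \<circ> inv g)" .
  have gS: "g \<in> S_group" unfolding g_def by (rule S_pow[OF S_x])
  have c0S: "inv (Yb 2) \<circ> Yb 1 \<in> S_group" using S_gen by (simp add: numeral_2_eq_2)
  show ?thesis unfolding eq using S_comp[OF S_comp[OF S_inv[OF gS] c0S] gS] .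
qed

lemma zpow_succ:
  assumes "bij g"
  shows "zpow g (a+1) = g \<circ> zpow g a" "zpow g (a+1) = zpow g a \<circ> g"
proof -
  have gi: "g \<circ> inv g = id" using bij_is_surj[OF assms, unfolded surj_iff] .
  have ig: "inv g \<circ> g = id" using bij_is_inj[OF assms, unfolded inj_iff] .
  have "zpow g (a+1) = g \<circ> zpow g a \<and> zpow g (a+1) = zpow g a \<circ> g"
  proof (cases "0 \<le> a")
    case True
    have h: "nat (a+1) = Suc (nat a)" using True by simp
    have z1: "zpow g (a+1) = g ^^ nat (a+1)" "zpow g a = g ^^ nat a"
      using True by (simp_all add: zpow_def)
    show ?thesis unfolding z1 h by (metis funpow.simps(2) funpow_Suc_right)
  next
    case False
    define q where "q = nat (-(a+1))"
    have nq: "nat (-a) = Suc q" using False unfolding q_def by simp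
    have za: "zpow g a = inv g \<circ> inv g ^^ q" "zpow g a = inv g ^^ q \<circ> inv g"
      using False nq by (simp_all add: zpow_def) (metis funpow.simps(2) funpow_Suc_right)
    have za1: "zpow g (a+1) = inv g ^^ q"
      using False unfolding zpow_def q_def by (cases "a = -1") auto
    have A1: "g \<circ> (inv g \<circ> inv g^^q) = inv g^^q" by (metis gi comp_assoc id_comp)
    have A2: "(inv g^^q \<circ> inv g) \<circ> g = inv g^^q" by (metis ig comp_assoc comp_id)
    have "zpow g (a+1) = g \<circ> zpow g a" by (simp only: za1 za(1) A1)
    moreover have "zpow g (a+1) = zpow g a \<circ> g" by (simp only: za1 za(2) A2)
    ultimately show ?thesis by blast
  qed
  then show "zpow g (a+1) = g \<circ> zpow g a" "zpow g (a+1) = zpow g a \<circ> g" by auto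
qed

lemma zpow_pred:
  assumes "bij g"
  shows "zpow g (a-1) = inv g \<circ> zpow g a" "zpow g (a-1) = zpow g a \<circ> inv g"
proof -
  have gi: "g \<circ> inv g = id" using bij_is_surj[OF assms, unfolded surj_iff] .
  have ig: "inv g \<circ> g = id" using bij_is_inj[OF assms, unfolded inj_iff] .
  have s1: "zpow g a = g \<circ> zpow g (a-1)" "zpow g a = zpow g (a-1) \<circ> g"
    using zpow_succ[OF assms, of "a-1"] by simp_all
  show "zpow g (a-1) = inv g \<circ> zpow g a" unfolding s1(1) using ig
    by (simp add: comp_assoc[symmetric])
  show "zpow g (a-1) = zpow g a \<circ> inv g" unfolding s1(2) using gi
    by (simp add: comp_assoc)
qed

lemma zpow_add:
  assumes "bij g"
  shows "zpow g (a+b) = zpow g a \<circ> zpow g b"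
proof (induction b rule: int_induct[where k=0])
  case base then show ?case by (simp add: zpow_def)
next
  case (step1 i)
  have "zpow g (a + (i+1)) = zpow g ((a+i)+1)" by (simp add: add.assoc)
  also have "\<dots> = zpow g (a+i) \<circ> g" by (rule zpow_succ(2)[OF assms])
  also have "\<dots> = zpow g a \<circ> (zpow g i \<circ> g)" using step1 by (metis comp_assoc)
  also have "\<dots> = zpow g a \<circ> zpow g (i+1)" using zpow_succ(2)[OF assms] by simp
  finally show ?case .
next
  case (step2 i)
  have "zpow g (a + (i-1)) = zpow g ((a+i)-1)" by (simp add: algebra_simps)
  also have "\<dots> = zpow g (a+i) \<circ> inv g" by (rule zpow_pred(2)[OF assms])
  also have "\<dots> = zpow g a \<circ> (zpow g i \<circ> inv g)" using step2 by (metis comp_assoc)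
  also have "\<dots> = zpow g a \<circ> zpow g (i-1)" using zpow_pred(2)[OF assms] by simp
  finally show ?case .
qed

lemma comm_inv:
  assumes "bij B" "A \<circ> B = B \<circ> A"
  shows "A \<circ> inv B = inv B \<circ> A"
  using conj_inv[OF assms(1) assms(1) assms(2)[symmetric]] by (rule sym)

lemma funpow_comm1: "f \<circ> g = g \<circ> f \<Longrightarrow> f ^^ n \<circ> g = g \<circ> f ^^ n"
  by (induction n) (auto simp: comp_assoc, metis comp_assoc)

lemma funpow_comp_comm: "f \<circ> g = g \<circ> f \<Longrightarrow> (f \<circ> g) ^^ n = f ^^ n \<circ> g ^^ n"
proof (induction n)
  case 0 then show ?case by simp
next
  case (Suc n)
  have c: "g \<circ> f ^^ n = f ^^ n \<circ> g" using funpow_comm1[OF Suc.prems] by simp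
  have "(f \<circ> g) ^^ Suc n = f \<circ> (g \<circ> f ^^ n) \<circ> g ^^ n"
    by (simp only: funpow.simps(2) Suc.IH[OF Suc.prems] comp_assoc)
  also have "\<dots> = f ^^ Suc n \<circ> g ^^ Suc n" unfolding c by (simp only: funpow.simps(2) comp_assoc)
  finally show ?case .
qed

lemma D_S:
  assumes bA: "bij A" and bB: "bij B" and cm: "A \<circ> B = B \<circ> A"
    and cS: "inv B \<circ> A \<in> S_group"
  shows "zpow B (-a) \<circ> zpow A a \<in> S_group"
proof (cases "0 \<le> a")
  case True
  have c: "inv B \<circ> A = A \<circ> inv B" using comm_inv[OF bB cm] by (rule sym)
  have "zpow B (-a) = inv B ^^ nat a"
    using True unfolding zpow_def by (cases "a = 0") auto
  then have "zpow B (-a) \<circ> zpow A a = (inv B \<circ> A) ^^ nat a"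
    using True funpow_comp_comm[OF c] by (simp add: zpow_def)
  then show ?thesis using S_pow[OF cS] by simp
next
  case False
  have c1: "B \<circ> inv A = inv A \<circ> B" using comm_inv[OF bA cm[symmetric]] .
  have iv: "inv (inv B \<circ> A) = inv A \<circ> B"
    using bA bB by (simp add: o_inv_distrib bij_imp_bij_inv inv_inv_eq)
  have "zpow B (-a) \<circ> zpow A a = (B \<circ> inv A) ^^ nat (-a)"
    using False funpow_comp_comm[OF c1] by (simp add: zpow_def)
  also have "\<dots> = (inv (inv B \<circ> A)) ^^ nat (-a)" using iv c1 by simp
  finally show ?thesis using S_pow[OF S_inv[OF cS]] by simp
qed



fun Q :: "nat \<Rightarrow> int list \<Rightarrow> homeo" where
  "Q m [] = id"
| "Q m (e # es) = Q (Suc m) es \<circ> zpow (Yb (Suc m)) e"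

lemma rprod_acc: fixes a :: homeo shows "foldl (\<lambda>acc g. g \<circ> acc) a xs = rprod xs \<circ> a"
proof (induction xs arbitrary: a)
  case Nil show ?case by (simp add: rprod_def)
next
  case (Cons y ys)
  have "foldl (\<lambda>acc g. g \<circ> acc) a (y#ys) = rprod ys \<circ> (y \<circ> a)"
    using Cons.IH[of "y \<circ> a"] by (simp only: foldl_Cons)
  moreover have "rprod (y#ys) = rprod ys \<circ> (y \<circ> id)"
    using Cons.IH[of "y \<circ> id"] by (simp only: rprod_def foldl_Cons)
  ultimately show ?case by (simp only: comp_assoc comp_id)
qed

lemma rprod_Cons: "rprod (x # xs) = rprod xs \<circ> x"
  using rprod_acc[of x xs] by (simp only: rprod_def foldl_Cons comp_id)

lemma Q_eq: "rprod (map (\<lambda>i. zpow (Yb (m+i)) (t i)) [1..<n+1]) = Q m (map t [1..<n+1])"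
proof (induction n arbitrary: m t)
  case 0 then show ?case by (simp add: rprod_def)
next
  case (Suc n)
  have l: "[1..<Suc n + 1] = 1 # map Suc [1..<n+1]"
    by (simp add: upt_conv_Cons map_Suc_upt del: upt_Suc)
  define F where "F = (\<lambda>i. zpow (Yb (m+i)) (t i))"
  have F1: "F \<circ> Suc = (\<lambda>i. zpow (Yb (Suc m + i)) (t (Suc i)))"
    by (rule ext) (simp only: F_def comp_apply add_Suc_right add_Suc)
  have F2: "F 1 = zpow (Yb (Suc m)) (t 1)"
    by (simp only: F_def One_nat_def add_Suc_right add_0_right)
  have IH: "rprod (map (\<lambda>i. zpow (Yb (Suc m + i)) (t (Suc i))) [1..<n+1]) =
            Q (Suc m) (map (t \<circ> Suc) [1..<n+1])"
    using Suc.IH[of "Suc m" "t \<circ> Suc"] unfolding comp_def .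
  have "rprod (map F [1..<Suc n + 1]) = rprod (map (F \<circ> Suc) [1..<n+1]) \<circ> F 1"
    by (simp only: l list.map map_map rprod_Cons)
  also have "\<dots> = Q (Suc m) (map (t \<circ> Suc) [1..<n+1]) \<circ> zpow (Yb (Suc m)) (t 1)"
    by (simp only: F1 F2 IH)
  also have "\<dots> = Q m (map t [1..<Suc n + 1])"
    by (simp only: l list.map map_map Q.simps)
  finally have fin: "rprod (map F [1..<Suc n + 1]) = Q m (map t [1..<Suc n + 1])" .
  show ?case using fin unfolding F_def by assumption
qed

lemma Q_S: "length es = N \<Longrightarrow> sum_list es = 0 \<Longrightarrow> Q m es \<in> S_group"
proof (induction N arbitrary: es m rule: less_induct)
  case (less N)
  show ?case
  proof (cases es)
    case Nil show ?thesis unfolding Nil Q.simps by (rule S_id)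
  next
    case (Cons e1 r1)
    show ?thesis
    proof (cases r1)
      case Nil
      then have "e1 = 0" using less.prems Cons by simp
      then show ?thesis using Cons Nil S_id by (simp add: zpow_def id_def)
    next
      case (Cons e2 r)
      note es = \<open>es = e1 # r1\<close>[unfolded Cons]
      have IH: "Q (Suc m) ((e1+e2) # r) \<in> S_group"
        by (rule less.IH[of "length ((e1+e2) # r)"]) (use less.prems es in auto)
      have bA: "bij (Yb (Suc m))" and bB: "bij (Yb (Suc (Suc m)))" by (rule y_at_bij)+
      have cm: "Yb (Suc m) \<circ> Yb (Suc (Suc m)) = Yb (Suc (Suc m)) \<circ> Yb (Suc m)"
        by (rule Y_comm) simp
      have cS: "inv (Yb (Suc (Suc m))) \<circ> Yb (Suc m) \<in> S_group"
        using ck_S[of m] by simp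
      have DS: "zpow (Yb (Suc (Suc m))) (-e1) \<circ> zpow (Yb (Suc m)) e1 \<in> S_group"
        by (rule D_S[OF bA bB cm cS])
      have za: "zpow (Yb (Suc (Suc m))) (e1+e2) \<circ> zpow (Yb (Suc (Suc m))) (-e1)
              = zpow (Yb (Suc (Suc m))) e2"
        using zpow_add[OF bB, of "e1+e2" "-e1"] by simp
      have eq: "Q m es = Q (Suc m) ((e1+e2) # r) \<circ>
              (zpow (Yb (Suc (Suc m))) (-e1) \<circ> zpow (Yb (Suc m)) e1)"
        unfolding es Q.simps by (metis comp_assoc za)
      show ?thesis unfolding eq by (rule S_comp[OF DS IH])
    qed
  qed
qed

theorem lemma6p8:
  fixes m n :: nat and s :: "nat \<Rightarrow> int"
  assumes "n \<ge> 1"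
    and "(\<Sum>i = 1..n. s i) = 0"
  shows "rprod (map (\<lambda>i. zpow (y_at (replicate (m + i) True @ [False])) (s i)) [1..<n + 1])
           \<in> S_group"
proof -
  have "sum_list (map s [1..<n+1]) = (\<Sum>i = 1..n. s i)"
  proof -
    have "set [1..<n+1] = {1..n}" by auto
    then show ?thesis by (simp only: interv_sum_list_conv_sum_set_nat)
  qed
  then have "sum_list (map s [1..<n+1]) = 0" using assms(2) by simp
  then show ?thesis unfolding Q_eq by (rule Q_S[OF refl])
qed

end
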